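(* Let $\alpha>-1$, $\beta<1$, $\gamma\in(0,1)$ with $(2+\alpha-\beta)\gamma\neq 1-\beta$, and let $\delta\in(0,\pi)$. Let $T_{\alpha,\beta,\gamma,\delta}$ be the self-adjoint operator in $L^2((0,\infty);x^\alpha dx)$ given by $T_{\alpha,\beta,\gamma,\delta}f=\tau_{\alpha,\beta,\gamma}f$ on \[ \operatorname{dom}(T_{\alpha,\beta,\gamma,\delta})=\big\{g\in\operatorname{dom}(T_{\alpha,\beta,\gamma,max})\,\big|\,\sin(\delta)\,\widetilde g^{\,\prime}(0)+\cos(\delta)\,\widetilde g(0)=0\big\}. \] Then there exists $f\in\operatorname{dom}(T_{\alpha,\beta,\gamma,\delta})$ (indeed one of the form $f=(T_{\alpha,\beta,\gamma,\delta}-zI)^{-1}g$ with $z\in\mathbb{C}\setminus\mathbb{R}$ and $g\in L^2((0,\infty);x^\alpha dx)$ compactly supported in $(0,\infty)$) such that \[ \lim_{\varepsilon\downarrow0}\int_\varepsilon^\infty dx\,x^\beta|f'(x)|^2=\infty \quad\text{and}\quad \lim_{\varepsilon\downarrow0}\int_\varepsilon^\infty dx\,x^{\beta-2}|f(x)|^2=\infty. \] In particular, the inequality of the form $\int_0^\infty [x^\beta|f'|^2 + \tfrac14((2+\alpha-\beta)^2\gamma^2-(1-\beta)^2)x^{\beta-2}|f|^2]\,dx \le \|f\|\,\|\tau_{\alpha,\beta,\gamma}f\|$ (norms in $L^2((0,\infty);x^\alpha dx)$), valid on the domain of the Friedrichs extension, does not extend to $\operatorname{dom}(T_{\alpha,\beta,\gamma,\delta})$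 for any $\delta\in(0,\pi)$.
   Context: For $\alpha>-1$, $\beta<1$, $\gamma\in(0,1)$ define the differential expression \[ \tau_{\alpha,\beta,\gamma} = x^{-\alpha}\Big[-\frac{d}{dx}x^{\beta}\frac{d}{dx} + \frac{(2+\alpha-\beta)^2\gamma^2-(1-\beta)^2}{4}x^{\beta-2}\Big],\quad x\in(0,\infty). \] The maximal operator $T_{\alpha,\beta,\gamma,max}$ in $L^2((0,\infty);x^\alpha dx)$ is $T_{\alpha,\beta,\gamma,max}f=\tau_{\alpha,\beta,\gamma}f$ with domain $\{g\in L^2((0,\infty);x^\alpha dx)\,|\, g, x^\beta g'\in AC_{loc}((0,\infty)),\ \tau_{\alpha,\beta,\gamma}g\in L^2((0,\infty);x^\alpha dx)\}$. For $g\in\operatorname{dom}(T_{\alpha,\beta,\gamma,max})$ the generalized boundary values \[ \widetilde g(0)=\lim_{x\downarrow0} \frac{g(x)}{(1-\beta)[(2+\alpha-\beta)\gamma]^{-1}x^{[1-\beta-(2+\alpha-\beta)\gamma]/2}}, \] \[ \widetilde g^{\,\prime}(0)=\lim_{x\downarrow0}\frac{g(x)-\widetilde g(0)(1-\beta)[(2+\alpha-\beta)\gamma]^{-1}x^{[1-\beta-(2+\alpha-\beta)\gamma]/2}}{(1-\beta)^{-1}x^{[1-\beta+(2+\alpha-\beta)\gamma]/2}} \] exist. For $\delta\in[0,\pi)$ these boundary conditions yield all self-adjoint extensions of $T_{\alpha,\beta,\gamma,max}^*$; $\delta=0$ is the Friedrichs extension. *)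

theory Defs
  imports "HOL-Analysis.Analysis"
begin

definition L2w :: "real \<Rightarrow> (real \<Rightarrow> complex) \<Rightarrow> bool" where
  "L2w \<alpha> g \<longleftrightarrow> set_borel_measurable lborel {0<..} g \<and>
     set_integrable lborel {0<..} (\<lambda>x. x powr \<alpha> * (cmod (g x))\<^sup>2)"

text \<open>ACloc g h: g is locally absolutely continuous on (0,infinity) with
  (a.e.) derivative h, i.e. h is integrable on compact subintervals and
  g b - g a is the integral of h over [a,b].\<close>
definition ACloc :: "(real \<Rightarrow> complex) \<Rightarrow> (real \<Rightarrow> complex) \<Rightarrow> bool" where
  "ACloc g h \<longleftrightarrow> (\<forall>a b. 0 < a \<longrightarrow> a \<le> b \<longrightarrow>
      set_integrable lborel {a..b} h \<and> g b - g a = (LINT x:{a..b}|lborel. h x))"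

definition qcoef :: "real \<Rightarrow> real \<Rightarrow> real \<Rightarrow> real" where
  "qcoef \<alpha> \<beta> \<gamma> = ((2 + \<alpha> - \<beta>)\<^sup>2 * \<gamma>\<^sup>2 - (1 - \<beta>)\<^sup>2) / 4"

text \<open>tau g, where k is the derivative of the quasi-derivative x^beta g'.\<close>
definition tau :: "real \<Rightarrow> real \<Rightarrow> real \<Rightarrow> (real \<Rightarrow> complex) \<Rightarrow> (real \<Rightarrow> complex) \<Rightarrow> real \<Rightarrow> complex" where
  "tau \<alpha> \<beta> \<gamma> g k x = complex_of_real (x powr (- \<alpha>)) *
      (- k x + complex_of_real (qcoef \<alpha> \<beta> \<gamma> * x powr (\<beta> - 2)) * g x)"

text \<open>g in dom(T_max), with g' a derivative of g such that x^beta g' is locally AC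
  with derivative k (so that tau g = tau \<alpha> \<beta> \<gamma> g k).\<close>
definition dmax :: "real \<Rightarrow> real \<Rightarrow> real \<Rightarrow> (real \<Rightarrow> complex) \<Rightarrow> (real \<Rightarrow> complex) \<Rightarrow> (real \<Rightarrow> complex) \<Rightarrow> bool" where
  "dmax \<alpha> \<beta> \<gamma> g g' k \<longleftrightarrow> L2w \<alpha> g \<and> ACloc g g' \<and>
     ACloc (\<lambda>x. complex_of_real (x powr \<beta>) * g' x) k \<and> L2w \<alpha> (tau \<alpha> \<beta> \<gamma> g k)"

text \<open>Principal / non-principal comparison functions for the generalized boundary values.\<close>
definition phi0 :: "real \<Rightarrow> real \<Rightarrow> real \<Rightarrow> real \<Rightarrow> real" where
  "phi0 \<alpha> \<beta> \<gamma> x = (1 - \<beta>) / ((2 + \<alpha> - \<beta>) * \<gamma>) *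
      x powr ((1 - \<beta> - (2 + \<alpha> - \<beta>) * \<gamma>) / 2)"

definition phi1 :: "real \<Rightarrow> real \<Rightarrow> real \<Rightarrow> real \<Rightarrow> real" where
  "phi1 \<alpha> \<beta> \<gamma> x = inverse (1 - \<beta>) * x powr ((1 - \<beta> + (2 + \<alpha> - \<beta>) * \<gamma>) / 2)"

text \<open>g in dom(T_{alpha,beta,gamma,delta}): the generalized boundary values
  gt0 = g~(0) and gt1 = g~'(0) exist and satisfy the boundary condition.\<close>
definition ddelta :: "real \<Rightarrow> real \<Rightarrow> real \<Rightarrow> real \<Rightarrow> (real \<Rightarrow> complex) \<Rightarrow> (real \<Rightarrow> complex) \<Rightarrow> (real \<Rightarrow> complex) \<Rightarrow> bool" where
  "ddelta \<alpha> \<beta> \<gamma> \<delta> g g' k \<longleftrightarrow> dmax \<alpha> \<beta> \<gamma> g g' k \<and>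
     (\<exists>gt0 gt1.
        ((\<lambda>x. g x / complex_of_real (phi0 \<alpha> \<beta> \<gamma> x)) \<longlongrightarrow> gt0) (at_right 0) \<and>
        ((\<lambda>x. (g x - gt0 * complex_of_real (phi0 \<alpha> \<beta> \<gamma> x)) / complex_of_real (phi1 \<alpha> \<beta> \<gamma> x))
            \<longlongrightarrow> gt1) (at_right 0) \<and>
        complex_of_real (sin \<delta>) * gt1 + complex_of_real (cos \<delta>) * gt0 = 0)"

end

theory Submission imports Defs "HOL-Real_Asymp.Real_Asymp" begin

fun cf :: "real \<Rightarrow> real \<Rightarrow> complex \<Rightarrow> nat \<Rightarrow> complex" where
  "cf m \<mu> z 0 = 1"
| "cf m \<mu> z (Suc n) = - z * cf m \<mu> z n / of_real (real (Suc n) * m * (real (Suc n) * m + \<mu>))"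

definition PS :: "(nat \<Rightarrow> complex) \<Rightarrow> complex \<Rightarrow> complex" where
  "PS c y = (\<Sum>n. c n * y ^ n)"

lemma cf_summable:
  assumes m: "m > 0" and mu: "\<mu> > - m"
  shows "summable (\<lambda>n. cf m \<mu> z n * y ^ n)"
proof -
  obtain N :: nat where N: "2 * cmod z * cmod y / m^2 \<le> real N"
    using real_arch_simple by blast
  show ?thesis
  proof (rule summable_ratio_test[of "1/2" N])
    fix n assume n: "N \<le> n"
    define D where "D = real (Suc n) * m * (real (Suc n) * m + \<mu>)"
    have D1: "real (Suc n) * m + \<mu> \<ge> real n * m" using mu by (simp add: algebra_simps)
    have "D \<ge> real (Suc n) * m * (real n * m)"
      unfolding D_def using D1 m by (intro mult_left_mono) auto
    also have "real (Suc n) * m * (real n * m) \<ge> m^2 * real n"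
      using m by (simp add: power2_eq_square algebra_simps mult_left_mono)
    finally have D2: "D \<ge> m^2 * real n" .
    have "m^2 * real n \<ge> m^2 * real N" using n m by (simp add: mult_left_mono)
    moreover have "m^2 * real N \<ge> 2 * cmod z * cmod y" using N m
      by (simp add: divide_le_eq mult.commute)
    ultimately have D3: "D \<ge> 2 * cmod z * cmod y" using D2 by linarith
    have "0 \<le> m * real n" using m by simp
    then have "0 < real (Suc n) * m + \<mu>" using mu by (simp add: algebra_simps)
    then have Dpos: "D > 0" unfolding D_def using m by simp
    have "cmod (cf m \<mu> z (Suc n) * y ^ Suc n) = cmod z * cmod y / D * cmod (cf m \<mu> z n * y ^ n)"
    proof -
      have "cf m \<mu> z (Suc n) * y ^ Suc n = (- z * y / of_real D) * (cf m \<mu> z n * y ^ n)"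
        unfolding cf.simps D_def[symmetric] by (simp add: algebra_simps)
      then show ?thesis using Dpos by (simp add: norm_mult norm_divide)
    qed
    also have "\<dots> \<le> 1/2 * cmod (cf m \<mu> z n * y ^ n)"
      apply (rule mult_right_mono) using D3 Dpos by (auto simp: divide_le_eq)
    finally show "cmod (cf m \<mu> z (Suc n) * y ^ Suc n) \<le> 1/2 * cmod (cf m \<mu> z n * y ^ n)" .
  qed simp
qed

lemma cf_entire_diffs:
  assumes m: "m > 0" and mu: "\<mu> > - m"
  shows "summable (\<lambda>n. diffs (cf m \<mu> z) n * y ^ n)"
    "summable (\<lambda>n. diffs (diffs (cf m \<mu> z)) n * y ^ n)"
    "summable (\<lambda>n. diffs (diffs (diffs (cf m \<mu> z))) n * y ^ n)"
proof -
  have 0: "\<And>y. summable (\<lambda>n. cf m \<mu> z n * y ^ n)" by (rule cf_summable[OF assms])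
  have 1: "\<And>y. summable (\<lambda>n. diffs (cf m \<mu> z) n * y ^ n)" by (rule termdiff_converges_all[OF 0])
  have 2: "\<And>y. summable (\<lambda>n. diffs (diffs (cf m \<mu> z)) n * y ^ n)" by (rule termdiff_converges_all[OF 1])
  have 3: "\<And>y. summable (\<lambda>n. diffs (diffs (diffs (cf m \<mu> z))) n * y ^ n)" by (rule termdiff_converges_all[OF 2])
  show "summable (\<lambda>n. diffs (cf m \<mu> z) n * y ^ n)" by (rule 1)
  show "summable (\<lambda>n. diffs (diffs (cf m \<mu> z)) n * y ^ n)" by (rule 2)
  show "summable (\<lambda>n. diffs (diffs (diffs (cf m \<mu> z))) n * y ^ n)" by (rule 3)
qed

lemma cf_term:
  assumes m: "m > 0" and mu: "\<mu> > - m"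
  shows "of_real (m^2) * (of_nat n * diffs (cf m \<mu> z) n * y^n) + of_real (m * (m + \<mu>)) * (diffs (cf m \<mu> z) n * y^n)
     + z * (cf m \<mu> z n * y^n) = 0"
proof -
  have "0 \<le> m * real n" using m by simp
  then have pos: "0 < real (Suc n) * m + \<mu>" using mu by (simp add: algebra_simps)
  define D where "D = m * (real (Suc n) * m + \<mu>)"
  have Dp: "D > 0" unfolding D_def using m pos by simp
  have o: "of_real (real (Suc n) * m * (real (Suc n) * m + \<mu>)) = (of_nat (Suc n) :: complex) * of_real D"
    unfolding D_def by (simp only: of_real_mult mult.assoc of_real_of_nat_eq)
  have d: "diffs (cf m \<mu> z) n = - z * cf m \<mu> z n / of_real D"
    unfolding diffs_def cf.simps o by (simp del: of_nat_Suc)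
  have e: "of_real (m^2) * of_nat n + of_real (m * (m + \<mu>)) = (of_real D :: complex)"
  proof -
    have "D = m^2 * real n + m * (m + \<mu>)" unfolding D_def by (simp add: algebra_simps power2_eq_square)
    then show ?thesis by (simp only: of_real_add of_real_mult of_real_of_nat_eq)
  qed
  have "of_real (m^2) * (of_nat n * diffs (cf m \<mu> z) n * y^n) + of_real (m * (m + \<mu>)) * (diffs (cf m \<mu> z) n * y^n)
     = (of_real (m^2) * of_nat n + of_real (m * (m + \<mu>))) * diffs (cf m \<mu> z) n * y^n"
    by (simp add: algebra_simps)
  also have "\<dots> = - z * (cf m \<mu> z n * y^n)" unfolding e d using Dp by (simp add: field_simps)
  finally show ?thesis by (simp add: algebra_simps)
qed

lemma PS_ode:
  assumes m: "m > 0" and mu: "\<mu> > - m"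
  shows "of_real (m^2) * (y * PS (diffs (diffs (cf m \<mu> z))) y) + of_real (m * (m + \<mu>)) * PS (diffs (cf m \<mu> z)) y
     + z * PS (cf m \<mu> z) y = 0"
proof -
  let ?c = "cf m \<mu> z"
  have s1: "(\<lambda>n. of_nat n * diffs ?c n * y^n) sums (y * PS (diffs (diffs ?c)) y)"
  proof -
    have "(\<lambda>n. y * (diffs (diffs ?c) n * y^n)) sums (y * PS (diffs (diffs ?c)) y)"
      unfolding PS_def by (intro sums_mult summable_sums cf_entire_diffs[OF assms])
    moreover have "(\<lambda>n. y * (diffs (diffs ?c) n * y^n)) = (\<lambda>n. of_nat (Suc n) * diffs ?c (Suc n) * y^(Suc n))"
      by (simp add: diffs_def algebra_simps)
    ultimately have "(\<lambda>n. of_nat (Suc n) * diffs ?c (Suc n) * y^(Suc n)) sums (y * PS (diffs (diffs ?c)) y)"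
      by simp
    then show ?thesis by (subst (asm) sums_Suc_iff) simp
  qed
  have s2: "(\<lambda>n. diffs ?c n * y^n) sums PS (diffs ?c) y"
    unfolding PS_def by (intro summable_sums cf_entire_diffs[OF assms])
  have s3: "(\<lambda>n. ?c n * y^n) sums PS ?c y"
    unfolding PS_def by (intro summable_sums cf_summable[OF assms])
  have "(\<lambda>n. of_real (m^2) * (of_nat n * diffs ?c n * y^n) + of_real (m * (m + \<mu>)) * (diffs ?c n * y^n)
     + z * (?c n * y^n)) sums (of_real (m^2) * (y * PS (diffs (diffs ?c)) y) + of_real (m * (m + \<mu>)) * PS (diffs ?c) y
     + z * PS ?c y)"
    by (rule sums_add[OF sums_add[OF sums_mult[OF s1] sums_mult[OF s2]] sums_mult[OF s3]])
  then have "(\<lambda>n. 0) sums (of_real (m^2) * (y * PS (diffs (diffs ?c)) y) + of_real (m * (m + \<mu>)) * PS (diffs ?c) y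
     + z * PS ?c y)" by (simp only: cf_term[OF assms])
  from sums_unique2[OF this sums_zero] show ?thesis .
qed



lemma glue_deriv:
  fixes f g f' g' :: "real \<Rightarrow> 'a::real_normed_vector"
  assumes f: "\<And>x. (f has_vector_derivative f' x) (at x)"
    and g: "\<And>x. (g has_vector_derivative g' x) (at x)"
    and e: "f c = g c" and e': "f' c = g' c"
  shows "((\<lambda>x. if x \<le> c then f x else g x) has_vector_derivative (if x \<le> c then f' x else g' x)) (at x)"
proof -
  have "((\<lambda>x. if x \<in> {..c} then f x else g x) has_vector_derivative (if x \<in> {..c} then f' x else g' x))
      (at x within UNIV)"
    by (rule has_vector_derivative_If_within_closures[where T="{c<..}"])
       (auto intro: has_vector_derivative_at_within f g simp: e e' dest: sym)
  then show ?thesis by simp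
qed

definition pp :: "real \<Rightarrow> real" where "pp t = 1 - 35*t^4 + 84*t^5 - 70*t^6 + 20*t^7"
definition pp1 :: "real \<Rightarrow> real" where "pp1 t = -140*t^3 + 420*t^4 - 420*t^5 + 140*t^6"
definition pp2 :: "real \<Rightarrow> real" where "pp2 t = -420*t^2 + 1680*t^3 - 2100*t^4 + 840*t^5"
definition pp3 :: "real \<Rightarrow> real" where "pp3 t = -840*t + 5040*t^2 - 8400*t^3 + 4200*t^4"

definition chi :: "real \<Rightarrow> real" where "chi x = (if x \<le> 1 then 1 else if x \<le> 2 then pp (x - 1) else 0)"
definition chi1 :: "real \<Rightarrow> real" where "chi1 x = (if x \<le> 1 then 0 else if x \<le> 2 then pp1 (x - 1) else 0)"
definition chi2 :: "real \<Rightarrow> real" where "chi2 x = (if x \<le> 1 then 0 else if x \<le> 2 then pp2 (x - 1) else 0)"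
definition chi3 :: "real \<Rightarrow> real" where "chi3 x = (if x \<le> 1 then 0 else if x \<le> 2 then pp3 (x - 1) else 0)"

lemma pp_deriv:
  "((\<lambda>x. pp (x - 1)) has_vector_derivative pp1 (x - 1)) (at x)"
  "((\<lambda>x. pp1 (x - 1)) has_vector_derivative pp2 (x - 1)) (at x)"
  "((\<lambda>x. pp2 (x - 1)) has_vector_derivative pp3 (x - 1)) (at x)"
  unfolding pp_def pp1_def pp2_def pp3_def has_real_derivative_iff_has_vector_derivative[symmetric]
  by (auto intro!: derivative_eq_intros simp: algebra_simps power2_eq_square power3_eq_cube
       eval_nat_numeral)

lemma const_vd: "((\<lambda>x. c) has_vector_derivative 0) (at x)"
  by (rule has_vector_derivative_const)

lemma chi_deriv:
  "(chi has_vector_derivative chi1 x) (at x)"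
  "(chi1 has_vector_derivative chi2 x) (at x)"
  "(chi2 has_vector_derivative chi3 x) (at x)"
proof -
  have i: "\<And>x. ((\<lambda>x. if x \<le> 2 then pp (x - 1) else 0) has_vector_derivative (if x \<le> 2 then pp1 (x - 1) else 0)) (at x)"
    by (rule glue_deriv[OF pp_deriv(1) const_vd]) (simp_all add: pp_def pp1_def)
  show "(chi has_vector_derivative chi1 x) (at x)"
    unfolding chi_def[abs_def] chi1_def
    by (rule glue_deriv[OF const_vd i]) (simp_all add: pp_def pp1_def)
next
  have i: "\<And>x. ((\<lambda>x. if x \<le> 2 then pp1 (x - 1) else 0) has_vector_derivative (if x \<le> 2 then pp2 (x - 1) else 0)) (at x)"
    by (rule glue_deriv[OF pp_deriv(2) const_vd]) (simp_all add: pp1_def pp2_def)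
  show "(chi1 has_vector_derivative chi2 x) (at x)"
    unfolding chi1_def[abs_def] chi2_def
    by (rule glue_deriv[OF const_vd i]) (simp_all add: pp1_def pp2_def)
next
  have i: "\<And>x. ((\<lambda>x. if x \<le> 2 then pp2 (x - 1) else 0) has_vector_derivative (if x \<le> 2 then pp3 (x - 1) else 0)) (at x)"
    by (rule glue_deriv[OF pp_deriv(3) const_vd]) (simp_all add: pp2_def pp3_def)
  show "(chi2 has_vector_derivative chi3 x) (at x)"
    unfolding chi2_def[abs_def] chi3_def
    by (rule glue_deriv[OF const_vd i]) (simp_all add: pp2_def pp3_def)
qed



lemma powr_comb:
  fixes x :: real
  assumes "a + b = c"
  shows "x powr a * x powr b = x powr c"
  using assms by (simp add: powr_add[symmetric])

lemma ofreal_powr_vd: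
  fixes x :: real
  assumes "x > 0"
  shows "((\<lambda>x. complex_of_real (c * x powr r)) has_vector_derivative complex_of_real (c * (r * x powr (r - 1)))) (at x)"
  by (intro has_vector_derivative_of_real DERIV_cmult has_real_derivative_powr assms)

lemma PS_comp_vd:
  fixes x :: real
  assumes "x > 0" and ent: "\<And>y. summable (\<lambda>n. d n * y ^ n)"
  shows "((\<lambda>x. PS d (complex_of_real (x powr m))) has_vector_derivative
            (complex_of_real (1 * (m * x powr (m - 1))) * PS (diffs d) (complex_of_real (x powr m)))) (at x)"
proof -
  have "((PS d \<circ> (\<lambda>x. complex_of_real (1 * x powr m))) has_vector_derivative
            (complex_of_real (1 * (m * x powr (m - 1))) * PS (diffs d) (complex_of_real (1 * x powr m)))) (at x)"
    apply (rule field_vector_diff_chain_at[OF ofreal_powr_vd[OF assms(1)]])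
    unfolding PS_def[abs_def] by (rule termdiffs_strong_converges_everywhere[OF ent])
  then show ?thesis by (simp add: o_def)
qed

definition ss :: "real \<Rightarrow> real \<Rightarrow> real" where "ss \<beta> \<mu> = (1 - \<beta> + \<mu>) / 2"

definition usol :: "real \<Rightarrow> real \<Rightarrow> real \<Rightarrow> complex \<Rightarrow> real \<Rightarrow> complex" where
  "usol m \<mu> \<beta> z x = complex_of_real (1 * x powr ss \<beta> \<mu>) * PS (cf m \<mu> z) (complex_of_real (x powr m))"

definition usol' :: "real \<Rightarrow> real \<Rightarrow> real \<Rightarrow> complex \<Rightarrow> real \<Rightarrow> complex" where
  "usol' m \<mu> \<beta> z x = complex_of_real (1 * x powr ss \<beta> \<mu>) *
       (complex_of_real (1 * (m * x powr (m - 1))) * PS (diffs (cf m \<mu> z)) (complex_of_real (x powr m))) +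
     complex_of_real (1 * (ss \<beta> \<mu> * x powr (ss \<beta> \<mu> - 1))) * PS (cf m \<mu> z) (complex_of_real (x powr m))"

definition Wsol :: "real \<Rightarrow> real \<Rightarrow> real \<Rightarrow> complex \<Rightarrow> real \<Rightarrow> complex" where
  "Wsol m \<mu> \<beta> z x = complex_of_real (ss \<beta> \<mu> * x powr (ss \<beta> \<mu> + \<beta> - 1)) * PS (cf m \<mu> z) (complex_of_real (x powr m)) +
     complex_of_real (m * x powr (ss \<beta> \<mu> + \<beta> + m - 1)) * PS (diffs (cf m \<mu> z)) (complex_of_real (x powr m))"

definition Ksol :: "real \<Rightarrow> real \<Rightarrow> real \<Rightarrow> complex \<Rightarrow> real \<Rightarrow> complex" where
  "Ksol m \<mu> \<beta> z x =
     (complex_of_real (ss \<beta> \<mu> * x powr (ss \<beta> \<mu> + \<beta> - 1)) *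
        (complex_of_real (1 * (m * x powr (m - 1))) * PS (diffs (cf m \<mu> z)) (complex_of_real (x powr m))) +
      complex_of_real (ss \<beta> \<mu> * ((ss \<beta> \<mu> + \<beta> - 1) * x powr (ss \<beta> \<mu> + \<beta> - 1 - 1))) * PS (cf m \<mu> z) (complex_of_real (x powr m))) +
     (complex_of_real (m * x powr (ss \<beta> \<mu> + \<beta> + m - 1)) *
        (complex_of_real (1 * (m * x powr (m - 1))) * PS (diffs (diffs (cf m \<mu> z))) (complex_of_real (x powr m))) +
      complex_of_real (m * ((ss \<beta> \<mu> + \<beta> + m - 1) * x powr (ss \<beta> \<mu> + \<beta> + m - 1 - 1))) * PS (diffs (cf m \<mu> z)) (complex_of_real (x powr m)))"

lemma usol_vd:
  assumes m: "m > 0" and mu: "\<mu> > - m" and x: "x > 0"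
  shows "(usol m \<mu> \<beta> z has_vector_derivative usol' m \<mu> \<beta> z x) (at x)"
  unfolding usol_def[abs_def] usol'_def
  by (intro has_vector_derivative_mult ofreal_powr_vd PS_comp_vd x cf_summable m mu)

lemma Wsol_vd:
  assumes m: "m > 0" and mu: "\<mu> > - m" and x: "x > 0"
  shows "(Wsol m \<mu> \<beta> z has_vector_derivative Ksol m \<mu> \<beta> z x) (at x)"
  unfolding Wsol_def[abs_def] Ksol_def
  by (intro has_vector_derivative_mult has_vector_derivative_add ofreal_powr_vd PS_comp_vd x cf_summable
      cf_entire_diffs m mu)

lemma Wsol_eq:
  assumes x: "x > 0"
  shows "Wsol m \<mu> \<beta> z x = complex_of_real (x powr \<beta>) * usol' m \<mu> \<beta> z x"
proof -
  let ?s = "ss \<beta> \<mu>"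
  have a: "x powr \<beta> * (x powr ?s * (m * x powr (m - 1))) = m * x powr (?s + \<beta> + m - 1)"
  proof -
    have "x powr \<beta> * (x powr ?s * (m * x powr (m - 1))) = m * ((x powr \<beta> * x powr ?s) * x powr (m - 1))"
      by (simp add: ac_simps)
    also have "\<dots> = m * x powr (?s + \<beta> + m - 1)"
      by (simp add: powr_comb) (simp add: algebra_simps)
    finally show ?thesis .
  qed
  have b: "x powr \<beta> * (?s * x powr (?s - 1)) = ?s * x powr (?s + \<beta> - 1)"
  proof -
    have "x powr \<beta> * (?s * x powr (?s - 1)) = ?s * (x powr \<beta> * x powr (?s - 1))" by (simp add: ac_simps)
    also have "\<dots> = ?s * x powr (?s + \<beta> - 1)" by (simp add: powr_comb) (simp add: algebra_simps)
    finally show ?thesis .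
  qed
  have "complex_of_real (x powr \<beta>) * usol' m \<mu> \<beta> z x =
     complex_of_real (x powr \<beta> * (x powr ?s * (m * x powr (m - 1)))) * PS (diffs (cf m \<mu> z)) (complex_of_real (x powr m)) +
     complex_of_real (x powr \<beta> * (?s * x powr (?s - 1))) * PS (cf m \<mu> z) (complex_of_real (x powr m))"
    unfolding usol'_def by (simp add: algebra_simps)
  also have "\<dots> = Wsol m \<mu> \<beta> z x" unfolding a b Wsol_def by (simp add: algebra_simps)
  finally show ?thesis by simp
qed

lemma ofr_comb2:
  fixes P :: complex
  shows "a * b = c \<Longrightarrow> complex_of_real a * (complex_of_real b * P) = complex_of_real c * P"
  by (metis mult.assoc of_real_mult)

lemma ofr_comb1:
  fixes P :: complex
  shows "a = c \<Longrightarrow> complex_of_real a * P = complex_of_real c * P"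
  by simp

lemma Ksol_ode:
  assumes m: "m > 0" and mu: "\<mu> > - m" and x: "x > 0"
    and q: "q = (\<mu>^2 - (1 - \<beta>)^2) / 4" and al: "m = 2 + \<alpha> - \<beta>"
  shows "Ksol m \<mu> \<beta> z x = complex_of_real (q * x powr (\<beta> - 2)) * usol m \<mu> \<beta> z x
           - z * complex_of_real (x powr \<alpha>) * usol m \<mu> \<beta> z x"
proof -
  let ?s = "ss \<beta> \<mu>"
  define X where "X = x powr (?s + \<beta> - 2)"
  define Y where "Y = x powr m"
  define P where "P = PS (cf m \<mu> z) (complex_of_real Y)"
  define P1 where "P1 = PS (diffs (cf m \<mu> z)) (complex_of_real Y)"
  define P2 where "P2 = PS (diffs (diffs (cf m \<mu> z))) (complex_of_real Y)"
  have ode: "complex_of_real (m^2) * (complex_of_real Y * P2) + complex_of_real (m * (m + \<mu>)) * P1 + z * P = 0"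
    unfolding P_def P1_def P2_def by (rule PS_ode[OF m mu])
  have c1: "?s * x powr (?s + \<beta> - 1) * (1 * (m * x powr (m - 1))) = ?s * m * X * Y"
  proof -
    have "x powr (?s + \<beta> - 1) * x powr (m - 1) = X * Y" unfolding X_def Y_def
      by (simp add: powr_comb) (simp add: algebra_simps)
    then show ?thesis by (simp add: algebra_simps)
  qed
  have c2: "?s * ((?s + \<beta> - 1) * x powr (?s + \<beta> - 1 - 1)) = ?s * (?s + \<beta> - 1) * X"
    unfolding X_def by (simp add: algebra_simps)
  have c3: "m * x powr (?s + \<beta> + m - 1) * (1 * (m * x powr (m - 1))) = m * m * X * Y * Y"
  proof -
    have "x powr (?s + \<beta> + m - 1) * x powr (m - 1) = X * (Y * Y)" unfolding X_def Y_def
      by (simp add: powr_comb) (simp add: algebra_simps)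
    then show ?thesis by (simp add: algebra_simps)
  qed
  have c4: "m * ((?s + \<beta> + m - 1) * x powr (?s + \<beta> + m - 1 - 1)) = m * (?s + \<beta> + m - 1) * X * Y"
  proof -
    have "x powr (?s + \<beta> + m - 1 - 1) = X * Y" unfolding X_def Y_def
      by (simp add: powr_comb) (simp add: algebra_simps)
    then show ?thesis by (simp add: algebra_simps)
  qed
  have c5: "q * x powr (\<beta> - 2) * (1 * x powr ?s) = q * X"
  proof -
    have "x powr (\<beta> - 2) * x powr ?s = X" unfolding X_def
      by (simp add: powr_comb) (simp add: algebra_simps)
    then show ?thesis by (simp add: algebra_simps)
  qed
  have c6: "x powr \<alpha> * (1 * x powr ?s) = X * Y"
    unfolding X_def Y_def using al by (simp add: powr_comb) (simp add: algebra_simps)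
  have K: "Ksol m \<mu> \<beta> z x = (complex_of_real (?s * m * X * Y) * P1 + complex_of_real (?s * (?s + \<beta> - 1) * X) * P) +
      (complex_of_real (m * m * X * Y * Y) * P2 + complex_of_real (m * (?s + \<beta> + m - 1) * X * Y) * P1)"
    unfolding Ksol_def P_def P1_def P2_def Y_def[symmetric]
    by (simp only: ofr_comb2[OF c1] ofr_comb1[OF c2] ofr_comb2[OF c3] ofr_comb1[OF c4])
  have R: "complex_of_real (q * x powr (\<beta> - 2)) * usol m \<mu> \<beta> z x
           - z * complex_of_real (x powr \<alpha>) * usol m \<mu> \<beta> z x = complex_of_real (q * X) * P - z * (complex_of_real (X * Y) * P)"
    unfolding usol_def P_def Y_def[symmetric]
    by (simp only: ofr_comb2[OF c5] ofr_comb2[OF c6] mult.assoc)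
  have hq: "q = ?s * (?s + \<beta> - 1)" unfolding q ss_def by (simp add: power2_eq_square field_simps)
  have hmu: "?s * m + m * (?s + \<beta> + m - 1) = m * (m + \<mu>)" unfolding ss_def by (simp add: field_simps)
  have "(complex_of_real (?s * m * X * Y) * P1 + complex_of_real (?s * (?s + \<beta> - 1) * X) * P) +
      (complex_of_real (m * m * X * Y * Y) * P2 + complex_of_real (m * (?s + \<beta> + m - 1) * X * Y) * P1)
      - (complex_of_real (q * X) * P - z * (complex_of_real (X * Y) * P))
      = complex_of_real (X * Y) * (complex_of_real (m^2) * (complex_of_real Y * P2) + complex_of_real (?s * m + m * (?s + \<beta> + m - 1)) * P1 + z * P)"
    unfolding hq by (simp add: algebra_simps power2_eq_square)
  also have "\<dots> = 0" unfolding hmu ode by simp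
  finally show ?thesis unfolding K R by simp
qed


lemma vd_cont:
  assumes "\<And>x. x > 0 \<Longrightarrow> (h has_vector_derivative h' x) (at x)"
  shows "continuous_on {0<..} h"
proof (rule continuous_on_vector_derivative)
  fix x :: real assume "x \<in> {0<..}"
  then have "x > 0" by simp
  from assms[OF this] show "(h has_vector_derivative h' x) (at x within {0<..})"
    by (rule has_vector_derivative_at_within)
qed

lemma ACloc_intro:
  assumes d: "\<And>x. x > 0 \<Longrightarrow> (G has_vector_derivative H x) (at x)"
    and c: "continuous_on {0<..} H"
  shows "ACloc G H"
  unfolding ACloc_def
proof (intro allI impI conjI)
  fix a b :: real assume a: "0 < a" and ab: "a \<le> b"
  have sub: "{a..b} \<subseteq> {0<..}" using a by auto
  have cab: "continuous_on {a..b} H" using c sub by (rule continuous_on_subset)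
  show si: "set_integrable lborel {a..b} H"
    unfolding set_integrable_def by (rule borel_integrable_compact[OF compact_Icc cab])
  have "(H has_integral (G b - G a)) {a..b}"
  proof (rule fundamental_theorem_of_calculus[OF ab])
    fix x assume "x \<in> {a..b}"
    then have "x > 0" using a by simp
    from d[OF this] show "(G has_vector_derivative H x) (at x within {a..b})"
      by (rule has_vector_derivative_at_within)
  qed
  then have "integral {a..b} H = G b - G a" by (rule integral_unique)
  then show "G b - G a = (LINT x:{a..b}|lborel. H x)"
    using set_borel_integral_eq_integral(2)[OF si] by simp
qed

lemma PS_comp_cont[continuous_intros]:
  assumes ent: "\<And>y. summable (\<lambda>n. d n * y ^ n)"
  shows "continuous_on {0<..} (\<lambda>x. PS d (complex_of_real (x powr m)))"
  by (rule vd_cont[OF PS_comp_vd[OF _ ent]]) auto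

lemma chi_cont[continuous_intros]:
  "continuous_on S chi" "continuous_on S chi1" "continuous_on S chi2"
  by (intro continuous_at_imp_continuous_on ballI has_vector_derivative_continuous[OF chi_deriv(1)]
      has_vector_derivative_continuous[OF chi_deriv(2)] has_vector_derivative_continuous[OF chi_deriv(3)])+

lemma ofr_chi_vd:
  "((\<lambda>x. complex_of_real (chi x)) has_vector_derivative complex_of_real (chi1 x)) (at x)"
  "((\<lambda>x. complex_of_real (chi1 x)) has_vector_derivative complex_of_real (chi2 x)) (at x)"
proof -
  have "(chi has_real_derivative chi1 x) (at x)"
    using chi_deriv(1)[of x] by (simp only: has_real_derivative_iff_has_vector_derivative)
  then show "((\<lambda>x. complex_of_real (chi x)) has_vector_derivative complex_of_real (chi1 x)) (at x)"
    by (rule has_vector_derivative_of_real)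
  have "(chi1 has_real_derivative chi2 x) (at x)"
    using chi_deriv(2)[of x] by (simp only: has_real_derivative_iff_has_vector_derivative)
  then show "((\<lambda>x. complex_of_real (chi1 x)) has_vector_derivative complex_of_real (chi2 x)) (at x)"
    by (rule has_vector_derivative_of_real)
qed

lemma chi_vals:
  "x \<le> 1 \<Longrightarrow> chi x = 1" "x \<le> 1 \<Longrightarrow> chi1 x = 0" "x \<le> 1 \<Longrightarrow> chi2 x = 0"
  "x \<ge> 2 \<Longrightarrow> chi x = 0" "x \<ge> 2 \<Longrightarrow> chi1 x = 0" "x \<ge> 2 \<Longrightarrow> chi2 x = 0"
proof -
  show "x \<le> 1 \<Longrightarrow> chi x = 1" "x \<le> 1 \<Longrightarrow> chi1 x = 0" "x \<le> 1 \<Longrightarrow> chi2 x = 0"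
    by (simp_all add: chi_def chi1_def chi2_def)
  have p: "pp 1 = 0" "pp1 1 = 0" "pp2 1 = 0" by (simp_all add: pp_def pp1_def pp2_def)
  assume x: "x \<ge> 2"
  show "chi x = 0" "chi1 x = 0" "chi2 x = 0"
  proof -
    consider "x = 2" | "x > 2" using x by linarith
    then show "chi x = 0" "chi1 x = 0" "chi2 x = 0"
      by (cases; simp add: chi_def chi1_def chi2_def p)+
  qed
qed


locale S6 =
  fixes \<alpha> \<beta> \<gamma> \<delta> :: real
  assumes a1: "\<alpha> > -1" and b1: "\<beta> < 1" and g0: "0 < \<gamma>" and g1: "\<gamma> < 1"
    and nu1: "(2 + \<alpha> - \<beta>) * \<gamma> \<noteq> 1 - \<beta>" and d0: "0 < \<delta>" and d1: "\<delta> < pi"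
begin

definition "mm = 2 + \<alpha> - \<beta>"
definition "nu = mm * \<gamma>"
definition "AA = (1 - \<beta>) * sin \<delta>"
definition "BB = - cos \<delta> * nu / (1 - \<beta>)"
definition "w x = complex_of_real AA * usol mm (- nu) \<beta> \<i> x + complex_of_real BB * usol mm nu \<beta> \<i> x"
definition "w' x = complex_of_real AA * usol' mm (- nu) \<beta> \<i> x + complex_of_real BB * usol' mm nu \<beta> \<i> x"
definition "V x = complex_of_real AA * Wsol mm (- nu) \<beta> \<i> x + complex_of_real BB * Wsol mm nu \<beta> \<i> x"
definition "Kw x = complex_of_real AA * Ksol mm (- nu) \<beta> \<i> x + complex_of_real BB * Ksol mm nu \<beta> \<i> x"
definition "R x = complex_of_real (1 * x powr \<beta>) * w x"
definition "ff x = complex_of_real (chi x) * w x"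
definition "ff' x = complex_of_real (chi x) * w' x + complex_of_real (chi1 x) * w x"
definition "kk x = (complex_of_real (chi1 x) * (complex_of_real (1 * x powr \<beta>) * w' x
     + complex_of_real (1 * (\<beta> * x powr (\<beta> - 1))) * w x) + complex_of_real (chi2 x) * R x)
     + (complex_of_real (chi x) * Kw x + complex_of_real (chi1 x) * V x)"
definition "gg x = (if x > 0 then tau \<alpha> \<beta> \<gamma> ff kk x - \<i> * ff x else 0)"

lemma mm_pos: "mm > 0"
  unfolding mm_def using a1 b1 by simp

lemma nu_pos: "nu > 0" and nu_lt: "nu < mm"
  unfolding nu_def using mm_pos g0 g1 by auto

lemma mu_ok: "- nu > - mm" "nu > - mm"
  using nu_pos nu_lt by auto

lemma w_vd: "x > 0 \<Longrightarrow> (w has_vector_derivative w' x) (at x)"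
  unfolding w_def[abs_def] w'_def
  by (rule has_vector_derivative_add; rule has_vector_derivative_mult_right;
      rule usol_vd[OF mm_pos]) (use mu_ok in auto)

lemma V_vd: "x > 0 \<Longrightarrow> (V has_vector_derivative Kw x) (at x)"
  unfolding V_def[abs_def] Kw_def
  by (rule has_vector_derivative_add; rule has_vector_derivative_mult_right;
      rule Wsol_vd[OF mm_pos]) (use mu_ok in auto)

lemma V_eq: "x > 0 \<Longrightarrow> V x = complex_of_real (x powr \<beta>) * w' x"
  unfolding V_def w'_def by (simp add: Wsol_eq algebra_simps)

lemma q_eq: "qcoef \<alpha> \<beta> \<gamma> = (nu^2 - (1 - \<beta>)^2) / 4" "qcoef \<alpha> \<beta> \<gamma> = ((- nu)^2 - (1 - \<beta>)^2) / 4"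
  unfolding qcoef_def nu_def mm_def by (simp_all add: power_mult_distrib)

lemma Kw_eq:
  assumes x: "x > 0"
  shows "Kw x = complex_of_real (qcoef \<alpha> \<beta> \<gamma> * x powr (\<beta> - 2)) * w x - \<i> * complex_of_real (x powr \<alpha>) * w x"
proof -
  have e1: "Ksol mm (- nu) \<beta> \<i> x = complex_of_real (qcoef \<alpha> \<beta> \<gamma> * x powr (\<beta> - 2)) * usol mm (- nu) \<beta> \<i> x
           - \<i> * complex_of_real (x powr \<alpha>) * usol mm (- nu) \<beta> \<i> x"
    by (rule Ksol_ode[OF mm_pos mu_ok(1) x q_eq(2)]) (simp add: mm_def)
  have e2: "Ksol mm nu \<beta> \<i> x = complex_of_real (qcoef \<alpha> \<beta> \<gamma> * x powr (\<beta> - 2)) * usol mm nu \<beta> \<i> x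
           - \<i> * complex_of_real (x powr \<alpha>) * usol mm nu \<beta> \<i> x"
    by (rule Ksol_ode[OF mm_pos mu_ok(2) x q_eq(1)]) (simp add: mm_def)
  show ?thesis unfolding Kw_def w_def e1 e2 by (simp add: algebra_simps)
qed

end


context S6
begin

lemma w_cont: "continuous_on {0<..} w"
  by (rule vd_cont[OF w_vd])

lemma V_cont: "continuous_on {0<..} V"
  by (rule vd_cont[OF V_vd])

lemma powr_inv1: "x > 0 \<Longrightarrow> x powr (- a) * x powr a = (1::real)"
  by (subst powr_comb[where c=0]) auto

lemma w'_cont: "continuous_on {0<..} w'"
proof -
  have "continuous_on {0<..} (\<lambda>x. complex_of_real (x powr (- \<beta>)) * V x)"
    by (intro continuous_intros V_cont) auto
  moreover have "\<And>x. x \<in> {0<..} \<Longrightarrow> complex_of_real (x powr (- \<beta>)) * V x = w' x"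
  proof -
    fix x :: real assume "x \<in> {0<..}"
    then have x: "x > 0" by simp
    have "complex_of_real (x powr (- \<beta>)) * V x = complex_of_real (x powr (- \<beta>) * x powr \<beta>) * w' x"
      using V_eq[OF x] by simp
    also have "\<dots> = w' x" using powr_inv1[OF x] by simp
    finally show "complex_of_real (x powr (- \<beta>)) * V x = w' x" .
  qed
  ultimately show ?thesis by (rule continuous_on_eq)
qed

lemma Kw_cont: "continuous_on {0<..} Kw"
proof -
  have "continuous_on {0<..} (\<lambda>x. complex_of_real (qcoef \<alpha> \<beta> \<gamma> * x powr (\<beta> - 2)) * w x - \<i> * complex_of_real (x powr \<alpha>) * w x)"
    by (intro continuous_intros w_cont) auto
  then show ?thesis by (rule continuous_on_eq) (simp add: Kw_eq)
qed

lemma R_cont: "continuous_on {0<..} R"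
  unfolding R_def[abs_def] by (intro continuous_intros w_cont) auto

lemma ff_vd: "x > 0 \<Longrightarrow> (ff has_vector_derivative ff' x) (at x)"
  unfolding ff_def[abs_def] ff'_def by (rule has_vector_derivative_mult[OF ofr_chi_vd(1) w_vd])

lemma ff_cont: "continuous_on {0<..} ff"
  by (rule vd_cont[OF ff_vd])

lemma ff'_cont: "continuous_on {0<..} ff'"
  unfolding ff'_def[abs_def] by (intro continuous_intros w_cont w'_cont)

lemma R_vd: "x > 0 \<Longrightarrow> (R has_vector_derivative (complex_of_real (1 * x powr \<beta>) * w' x
     + complex_of_real (1 * (\<beta> * x powr (\<beta> - 1))) * w x)) (at x)"
  unfolding R_def[abs_def] by (rule has_vector_derivative_mult[OF ofreal_powr_vd w_vd])

lemma RV_vd: "x > 0 \<Longrightarrow> ((\<lambda>x. complex_of_real (chi1 x) * R x + complex_of_real (chi x) * V x) has_vector_derivative kk x) (at x)"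
  unfolding kk_def
  by (rule has_vector_derivative_add[OF has_vector_derivative_mult[OF ofr_chi_vd(2) R_vd]
        has_vector_derivative_mult[OF ofr_chi_vd(1) V_vd]])

lemma kk_vd:
  assumes x: "x > 0"
  shows "((\<lambda>x. complex_of_real (x powr \<beta>) * ff' x) has_vector_derivative kk x) (at x)"
proof (rule has_vector_derivative_transform_within_open[OF RV_vd[OF x] open_greaterThan])
  show "x \<in> {0<..}" using x by simp
  fix y :: real assume "y \<in> {0<..}"
  then have y: "y > 0" by simp
  show "complex_of_real (chi1 y) * R y + complex_of_real (chi y) * V y = complex_of_real (y powr \<beta>) * ff' y"
    unfolding R_def ff'_def V_eq[OF y] by (simp add: algebra_simps)
qed

lemma kk_cont: "continuous_on {0<..} kk"
  unfolding kk_def[abs_def] by (intro continuous_intros w_cont w'_cont R_cont Kw_cont V_cont) auto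

lemma AC1: "ACloc ff ff'"
  by (rule ACloc_intro[OF ff_vd ff'_cont])

lemma AC2: "ACloc (\<lambda>x. complex_of_real (x powr \<beta>) * ff' x) kk"
  by (rule ACloc_intro[OF kk_vd kk_cont])

lemma tau_small:
  assumes x: "0 < x" "x \<le> 1"
  shows "tau \<alpha> \<beta> \<gamma> ff kk x - \<i> * ff x = 0"
proof -
  have k: "kk x = Kw x" and f: "ff x = w x"
    unfolding kk_def ff_def using chi_vals(1-3)[OF x(2)] by simp_all
  have "tau \<alpha> \<beta> \<gamma> ff kk x = complex_of_real (x powr (- \<alpha>)) * (\<i> * complex_of_real (x powr \<alpha>) * w x)"
    unfolding tau_def k f Kw_eq[OF x(1)] by (simp add: algebra_simps)
  also have "\<dots> = \<i> * complex_of_real (x powr (- \<alpha>) * x powr \<alpha>) * w x" by (simp add: algebra_simps)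
  also have "\<dots> = \<i> * w x" using powr_inv1[OF x(1)] by simp
  finally show ?thesis using f by simp
qed

lemma tau_big:
  assumes x: "x \<ge> 2"
  shows "tau \<alpha> \<beta> \<gamma> ff kk x - \<i> * ff x = 0"
proof -
  have "kk x = 0" "ff x = 0" unfolding kk_def ff_def using chi_vals(4-6)[OF x] by simp_all
  then show ?thesis unfolding tau_def by simp
qed

lemma gg_zero: "x \<notin> {1..2} \<Longrightarrow> gg x = 0"
  unfolding gg_def using tau_small[of x] tau_big[of x] by auto

lemma gg_cont: "continuous_on {0<..} gg"
proof -
  have "continuous_on {0<..} (\<lambda>x. tau \<alpha> \<beta> \<gamma> ff kk x - \<i> * ff x)"
    unfolding tau_def by (intro continuous_intros ff_cont kk_cont) auto
  then show ?thesis by (rule continuous_on_eq) (simp add: gg_def)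
qed

end


lemma cont_meas:
  fixes F :: "real \<Rightarrow> 'a::real_normed_vector"
  assumes "continuous_on S F" "S \<in> sets borel"
  shows "set_borel_measurable lborel S F"
  unfolding set_borel_measurable_def measurable_lborel2
  by (rule borel_measurable_continuous_on_indicator[OF assms(2,1)])

lemma powr_set_integrable:
  fixes a e c :: real
  assumes a: "a > -1" and e: "e \<ge> 0" and c: "c \<ge> 0"
  shows "set_integrable lborel {0<..e} (\<lambda>x. c * x powr a)"
proof -
  have "(\<lambda>x. x powr a) integrable_on {0<..e}" by (rule integrable_on_powr_from_0'[OF a e])
  then have "(\<lambda>x. of_real c * x powr a) integrable_on {0<..e}" by (rule integrable_on_cmult_left)
  then have "(\<lambda>x. c * x powr a) absolutely_integrable_on {0<..e}"
    using c by (subst absolutely_integrable_on_iff_nonneg) auto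
  then have "integrable lebesgue (\<lambda>x. indicator {0<..e} x *\<^sub>R (c * x powr a))"
    by (simp add: set_integrable_def)
  moreover have "(\<lambda>x. indicator {0<..e} x *\<^sub>R (c * x powr a)) \<in> borel_measurable lborel"
    using cont_meas[of "{0<..e}" "\<lambda>x. c * x powr a"] unfolding set_borel_measurable_def
    by (auto intro!: continuous_intros)
  ultimately show ?thesis unfolding set_integrable_def using integrable_completion by blast
qed

lemma bound_from_lim:
  fixes h :: "real \<Rightarrow> complex"
  assumes lim: "((\<lambda>x. h x / complex_of_real (x powr p)) \<longlongrightarrow> L) (at_right 0)"
  shows "\<exists>e>0. \<forall>x. 0 < x \<longrightarrow> x \<le> e \<longrightarrow> cmod (h x) \<le> (cmod L + 1) * x powr p"
proof -
  have "eventually (\<lambda>x. dist (h x / complex_of_real (x powr p)) L < 1) (at_right 0)"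
    using lim by (rule tendstoD) simp
  then obtain b where b: "b > 0" and hb: "\<And>y. y > 0 \<Longrightarrow> y < b \<Longrightarrow> dist (h y / complex_of_real (y powr p)) L < 1"
    unfolding eventually_at_right_field by auto
  show ?thesis
  proof (intro exI[of _ "b/2"] conjI allI impI)
    show "b/2 > 0" using b by simp
    fix x :: real assume x: "0 < x" "x \<le> b/2"
    then have d: "dist (h x / complex_of_real (x powr p)) L < 1" using hb b by simp
    have "cmod (h x / complex_of_real (x powr p)) \<le> cmod L + 1"
      using d norm_triangle_ineq2[of "h x / complex_of_real (x powr p)" L] by (simp add: dist_norm)
    moreover have "cmod (h x / complex_of_real (x powr p)) = cmod (h x) / x powr p"
      using x by (simp add: norm_divide)
    ultimately have "cmod (h x) / x powr p \<le> cmod L + 1" by simp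
    then show "cmod (h x) \<le> (cmod L + 1) * x powr p" using x by (simp add: divide_le_eq)
  qed
qed

lemma L2_gen:
  fixes h :: "real \<Rightarrow> complex"
  assumes cont: "continuous_on {0<..} h" and zero: "\<And>x. x \<ge> b \<Longrightarrow> h x = 0"
    and bound: "\<And>x. 0 < x \<Longrightarrow> x \<le> e \<Longrightarrow> cmod (h x) \<le> C * x powr p"
    and e: "0 < e" "e \<le> b" and ex: "\<alpha> + 2 * p > -1"
  shows "set_integrable lborel {0<..} (\<lambda>x. x powr \<alpha> * (cmod (h x))\<^sup>2)"
proof -
  define F where "F = (\<lambda>x. x powr \<alpha> * (cmod (h x))\<^sup>2)"
  have Fc: "continuous_on {0<..} F" unfolding F_def by (intro continuous_intros cont) auto
  have I1: "set_integrable lborel {e..b} F"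
    unfolding set_integrable_def
    by (rule borel_integrable_compact[OF compact_Icc continuous_on_subset[OF Fc]]) (use e in auto)
  have I2: "set_integrable lborel {0<..e} F"
  proof (rule set_integrable_bound[OF powr_set_integrable[of "\<alpha> + 2 * p" e "C^2"]])
    show "\<alpha> + 2 * p > -1" by (rule ex)
    show "0 \<le> e" using e by simp
    show "0 \<le> C^2" by simp
    show "set_borel_measurable lborel {0<..e} F"
      by (rule cont_meas[OF continuous_on_subset[OF Fc]]) auto
    show "AE x in lborel. x \<in> {0<..e} \<longrightarrow> norm (F x) \<le> norm (C^2 * x powr (\<alpha> + 2 * p))"
    proof (rule AE_I2, intro impI)
      fix x assume "x \<in> {0<..e}"
      then have x: "0 < x" "x \<le> e" by auto
      have hb: "cmod (h x) \<le> C * x powr p" by (rule bound[OF x])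
      have "(cmod (h x))\<^sup>2 \<le> (C * x powr p)\<^sup>2"
        using hb by (intro power_mono) auto
      also have "\<dots> = C^2 * (x powr p * x powr p)" by (simp add: power2_eq_square)
      also have "\<dots> = C^2 * x powr (2 * p)" by (simp add: powr_comb)
      finally have h2: "(cmod (h x))\<^sup>2 \<le> C^2 * x powr (2 * p)" .
      have "F x = x powr \<alpha> * (cmod (h x))\<^sup>2" by (simp add: F_def)
      also have "\<dots> \<le> x powr \<alpha> * (C^2 * x powr (2 * p))" using h2 by (intro mult_left_mono) auto
      also have "\<dots> = C^2 * (x powr \<alpha> * x powr (2 * p))" by (simp add: algebra_simps)
      also have "\<dots> = C^2 * x powr (\<alpha> + 2 * p)" by (simp add: powr_comb)
      finally have "F x \<le> C^2 * x powr (\<alpha> + 2 * p)" .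
      moreover have "F x \<ge> 0" unfolding F_def by simp
      ultimately show "norm (F x) \<le> norm (C^2 * x powr (\<alpha> + 2 * p))" by simp
    qed
  qed
  have U: "set_integrable lborel ({0<..e} \<union> {e..b}) F"
    by (rule set_integrable_Un[OF I2 I1]) auto
  have eq: "(\<lambda>x. indicator ({0<..e} \<union> {e..b}) x *\<^sub>R F x) = (\<lambda>x. indicator {0<..} x *\<^sub>R F x)"
  proof
    fix x :: real
    show "indicator ({0<..e} \<union> {e..b}) x *\<^sub>R F x = indicator {0<..} x *\<^sub>R F x"
    proof (cases "x > b")
      case True
      then show ?thesis using zero[of x] by (simp add: F_def)
    next
      case False
      then have "x \<in> {0<..e} \<union> {e..b} \<longleftrightarrow> x \<in> {0<..}" using e by auto
      then show ?thesis by (simp add: indicator_def)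
    qed
  qed
  have "integrable lborel (\<lambda>x. indicator {0<..} x *\<^sub>R F x)" using U unfolding set_integrable_def eq .
  then show ?thesis unfolding set_integrable_def F_def .
qed


lemma asymp_aux:
  fixes c e d :: real
  shows "c > 0 \<Longrightarrow> e > 0 \<Longrightarrow> filterlim (\<lambda>x::real. d - (- (c / e) * (2 * x) powr (- e))) at_top (at_right 0)"
  by real_asymp

lemma powr_to0:
  fixes a :: real
  shows "a > 0 \<Longrightarrow> ((\<lambda>x::real. x powr a) \<longlongrightarrow> 0) (at_right 0)"
  by real_asymp

lemma energy_div:
  fixes h :: "real \<Rightarrow> complex"
  assumes lim: "((\<lambda>x. cmod (h x) / x powr p) \<longlongrightarrow> L) (at_right 0)" and L: "L > 0" and e: "e > 0"
    and qe: "q + 2 * p = - e - 1"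
  shows "((\<lambda>\<epsilon>. \<integral>\<^sup>+ x\<in>{\<epsilon><..}. ennreal (x powr q * (cmod (h x))\<^sup>2) \<partial>lborel) \<longlongrightarrow> \<infinity>) (at_right 0)"
proof -
  have "eventually (\<lambda>x. L/2 < cmod (h x) / x powr p) (at_right 0)"
    by (rule order_tendstoD(1)[OF lim]) (use L in simp)
  then obtain b where b: "b > 0" and hb: "\<And>y. y > 0 \<Longrightarrow> y < b \<Longrightarrow> L/2 < cmod (h y) / y powr p"
    unfolding eventually_at_right_field by auto
  define \<eta> where "\<eta> = b / 2"
  have eta: "\<eta> > 0" "\<eta> < b" using b by (auto simp: \<eta>_def)
  define c where "c = L^2 / 4"
  have c: "c > 0" using L by (simp add: c_def)
  define F where "F = (\<lambda>x::real. - (c / e) * x powr (- e))"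
  have lowb: "c * x powr (- e - 1) \<le> x powr q * (cmod (h x))\<^sup>2" if x: "0 < x" "x \<le> \<eta>" for x
  proof -
    have "L/2 < cmod (h x) / x powr p" using hb[of x] x eta by simp
    then have l1: "L/2 * x powr p < cmod (h x)" using x by (simp add: pos_less_divide_eq)
    have "(L/2 * x powr p)\<^sup>2 \<le> (cmod (h x))\<^sup>2"
      using l1 L x by (intro power_mono) auto
    then have l2: "c * (x powr p * x powr p) \<le> (cmod (h x))\<^sup>2"
      by (simp add: c_def power2_eq_square algebra_simps)
    have "c * x powr (- e - 1) = x powr q * (c * (x powr p * x powr p))"
    proof -
      have "x powr q * (x powr p * x powr p) = x powr (- e - 1)"
        using qe by (simp add: powr_comb mult.assoc[symmetric])
      then show ?thesis by (simp add: algebra_simps)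
    qed
    also have "\<dots> \<le> x powr q * (cmod (h x))\<^sup>2" using l2 by (intro mult_left_mono) auto
    finally show ?thesis .
  qed
  have FTC: "(\<integral>\<^sup>+x. ennreal (c * x powr (- e - 1)) * indicator {a..\<eta>} x \<partial>lborel) = ennreal (F \<eta> - F a)"
    if a: "0 < a" "a \<le> \<eta>" for a
  proof (rule nn_integral_FTC_Icc)
    show "(\<lambda>x. c * x powr (- e - 1)) \<in> borel_measurable borel" by measurable
    show "a \<le> \<eta>" by (rule a(2))
    fix x assume "x \<in> {a..\<eta>}"
    then have x: "x > 0" using a by auto
    show "0 \<le> c * x powr (- e - 1)" using c by simp
    have "(F has_real_derivative - (c / e) * (- e * x powr (- e - 1))) (at x)"
      unfolding F_def by (intro DERIV_cmult has_real_derivative_powr x)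
    then show "(F has_real_derivative c * x powr (- e - 1)) (at x)"
      using e by simp
  qed
  have mono: "ennreal (F \<eta> - F (2 * \<epsilon>)) \<le> (\<integral>\<^sup>+ x\<in>{\<epsilon><..}. ennreal (x powr q * (cmod (h x))\<^sup>2) \<partial>lborel)"
    if ep: "0 < \<epsilon>" "2 * \<epsilon> \<le> \<eta>" for \<epsilon>
  proof -
    have "ennreal (F \<eta> - F (2 * \<epsilon>)) = (\<integral>\<^sup>+x. ennreal (c * x powr (- e - 1)) * indicator {2 * \<epsilon>..\<eta>} x \<partial>lborel)"
      using FTC[of "2 * \<epsilon>"] ep by simp
    also have "\<dots> \<le> (\<integral>\<^sup>+ x. ennreal (x powr q * (cmod (h x))\<^sup>2) * indicator {\<epsilon><..} x \<partial>lborel)"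
    proof (rule nn_integral_mono)
      fix x :: real
      show "ennreal (c * x powr (- e - 1)) * indicator {2 * \<epsilon>..\<eta>} x \<le> ennreal (x powr q * (cmod (h x))\<^sup>2) * indicator {\<epsilon><..} x"
      proof (cases "x \<in> {2 * \<epsilon>..\<eta>}")
        case True
        then have "0 < x" "x \<le> \<eta>" "x \<in> {\<epsilon><..}" using ep by auto
        then show ?thesis using True lowb[of x] by (simp add: ennreal_leI)
      qed simp
    qed
    finally show ?thesis .
  qed
  have lim2: "filterlim (\<lambda>\<epsilon>. F \<eta> - F (2 * \<epsilon>)) at_top (at_right 0)"
    unfolding F_def by (rule asymp_aux[OF c e])
  show ?thesis unfolding infinity_ennreal_def tendsto_top_iff_ennreal
  proof (intro allI impI)
    fix l :: real assume l: "l \<ge> 0"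
    have ev1: "eventually (\<lambda>\<epsilon>. l < F \<eta> - F (2 * \<epsilon>)) (at_right 0)"
      using lim2 unfolding filterlim_at_top_dense by blast
    have ev2: "eventually (\<lambda>\<epsilon>. 0 < \<epsilon> \<and> 2 * \<epsilon> \<le> \<eta>) (at_right 0)"
      unfolding eventually_at_right_field using eta by (intro exI[of _ "\<eta>/2"]) auto
    show "eventually (\<lambda>\<epsilon>. ennreal l < (\<integral>\<^sup>+ x\<in>{\<epsilon><..}. ennreal (x powr q * (cmod (h x))\<^sup>2) \<partial>lborel)) (at_right 0)"
      using ev1 ev2
    proof eventually_elim
      case (elim \<epsilon>)
      then have "ennreal l < ennreal (F \<eta> - F (2 * \<epsilon>))" using l by (simp add: ennreal_less_iff)
      also have "\<dots> \<le> (\<integral>\<^sup>+ x\<in>{\<epsilon><..}. ennreal (x powr q * (cmod (h x))\<^sup>2) \<partial>lborel)"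
        using mono elim by simp
      finally show ?case .
    qed
  qed
qed


lemma PS_tend0:
  assumes ent: "\<And>y. summable (\<lambda>n. c n * y ^ n)" and m: "m > 0"
  shows "((\<lambda>x. PS c (complex_of_real (x powr m))) \<longlongrightarrow> c 0) (at_right 0)"
proof -
  have ic: "isCont (PS c) 0" unfolding PS_def[abs_def] by (rule isCont_powser_converges_everywhere[OF ent])
  have t: "((\<lambda>x. complex_of_real (x powr m)) \<longlongrightarrow> complex_of_real 0) (at_right 0)"
    by (rule tendsto_of_real[OF powr_to0[OF m]])
  then have t: "((\<lambda>x. complex_of_real (x powr m)) \<longlongrightarrow> 0) (at_right 0)" by simp
  have "((\<lambda>x. PS c (complex_of_real (x powr m))) \<longlongrightarrow> PS c 0) (at_right 0)"
    using isCont_tendsto_compose[OF ic t] by simp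
  moreover have "PS c 0 = c 0" unfolding PS_def by simp
  ultimately show ?thesis by simp
qed

lemma PS_split:
  assumes ent: "\<And>y. summable (\<lambda>n. c n * y ^ n)"
  shows "PS c y = c 0 + PS (\<lambda>n. c (Suc n)) y * y" "\<And>y. summable (\<lambda>n. c (Suc n) * y ^ n)"
  unfolding PS_def using powser_split_head(1,3)[OF ent] by blast+

lemma powr_div:
  fixes x :: real
  shows "x > 0 \<Longrightarrow> a - b = c \<Longrightarrow> x powr a / x powr b = x powr c"
  by (simp add: powr_diff[symmetric])

context S6
begin

definition "sm = ss \<beta> (- nu)"
definition "sp = ss \<beta> nu"

lemma sp_sm: "sp - sm = nu" unfolding sp_def sm_def ss_def by (simp add: field_simps)

lemma ent_m: "\<And>y. summable (\<lambda>n. cf mm (- nu) \<i> n * y ^ n)" "\<And>y. summable (\<lambda>n. diffs (cf mm (- nu) \<i>) n * y ^ n)"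
  using cf_summable[OF mm_pos mu_ok(1)] cf_entire_diffs(1)[OF mm_pos mu_ok(1)] by auto

lemma ent_p: "\<And>y. summable (\<lambda>n. cf mm nu \<i> n * y ^ n)" "\<And>y. summable (\<lambda>n. diffs (cf mm nu \<i>) n * y ^ n)"
  using cf_summable[OF mm_pos mu_ok(2)] cf_entire_diffs(1)[OF mm_pos mu_ok(2)] by auto

lemma evpos: "eventually (\<lambda>x::real. x > 0) (at_right 0)"
  by (rule eventually_at_right_less)

lemma LA: "((\<lambda>x. w x / complex_of_real (x powr sm)) \<longlongrightarrow> complex_of_real AA) (at_right 0)"
proof -
  let ?Pm = "\<lambda>x. PS (cf mm (- nu) \<i>) (complex_of_real (x powr mm))"
  let ?Pp = "\<lambda>x. PS (cf mm nu \<i>) (complex_of_real (x powr mm))"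
  have "((\<lambda>x. complex_of_real AA * ?Pm x + complex_of_real BB * (complex_of_real (x powr nu) * ?Pp x))
     \<longlongrightarrow> complex_of_real AA * 1 + complex_of_real BB * (complex_of_real 0 * 1)) (at_right 0)"
    using PS_tend0[OF ent_m(1) mm_pos] PS_tend0[OF ent_p(1) mm_pos]
    by (intro tendsto_intros tendsto_of_real[OF powr_to0[OF nu_pos]]) auto
  then have t: "((\<lambda>x. complex_of_real AA * ?Pm x + complex_of_real BB * (complex_of_real (x powr nu) * ?Pp x))
     \<longlongrightarrow> complex_of_real AA) (at_right 0)" by simp
  show ?thesis
  proof (rule Lim_transform_eventually[OF t])
    show "eventually (\<lambda>x. complex_of_real AA * ?Pm x + complex_of_real BB * (complex_of_real (x powr nu) * ?Pp x)
        = w x / complex_of_real (x powr sm)) (at_right 0)"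
      using evpos
    proof eventually_elim
      case (elim x)
      have pd: "x powr sp / x powr sm = x powr nu" by (rule powr_div[OF elim sp_sm])
      have "w x / complex_of_real (x powr sm) = complex_of_real AA * ?Pm x
          + complex_of_real BB * (complex_of_real (x powr sp / x powr sm) * ?Pp x)"
        unfolding w_def usol_def sm_def[symmetric] sp_def[symmetric] using elim
        by (simp add: field_simps)
      then show ?case unfolding pd by simp
    qed
  qed
qed


lemma LB: "((\<lambda>x. (w x - complex_of_real AA * complex_of_real (x powr sm)) / complex_of_real (x powr sp)) \<longlongrightarrow> complex_of_real BB) (at_right 0)"
proof -
  let ?Y = "\<lambda>x. complex_of_real (x powr mm)"
  let ?Qm = "\<lambda>x. PS (\<lambda>n. cf mm (- nu) \<i> (Suc n)) (complex_of_real (x powr mm))"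
  let ?Pp = "\<lambda>x. PS (cf mm nu \<i>) (complex_of_real (x powr mm))"
  have mn: "mm - nu > 0" using nu_lt by simp
  have "((\<lambda>x. complex_of_real AA * (complex_of_real (x powr (mm - nu)) * ?Qm x) + complex_of_real BB * ?Pp x)
     \<longlongrightarrow> complex_of_real AA * (complex_of_real 0 * cf mm (- nu) \<i> (Suc 0)) + complex_of_real BB * 1) (at_right 0)"
    using PS_tend0[OF PS_split(2)[OF ent_m(1)] mm_pos] PS_tend0[OF ent_p(1) mm_pos]
    by (intro tendsto_intros tendsto_of_real[OF powr_to0[OF mn]]) auto
  then have t: "((\<lambda>x. complex_of_real AA * (complex_of_real (x powr (mm - nu)) * ?Qm x) + complex_of_real BB * ?Pp x)
     \<longlongrightarrow> complex_of_real BB) (at_right 0)" by simp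
  show ?thesis
  proof (rule Lim_transform_eventually[OF t])
    show "eventually (\<lambda>x. complex_of_real AA * (complex_of_real (x powr (mm - nu)) * ?Qm x) + complex_of_real BB * ?Pp x
        = (w x - complex_of_real AA * complex_of_real (x powr sm)) / complex_of_real (x powr sp)) (at_right 0)"
      using evpos
    proof eventually_elim
      case (elim x)
      have ex: "sp + (mm - nu) = sm + mm" using sp_sm by simp
      have r: "x powr sm * x powr mm = x powr sp * x powr (mm - nu)"
        by (simp add: powr_comb ex)
      have r': "complex_of_real (x powr sm) * complex_of_real (x powr mm) = complex_of_real (x powr sp) * complex_of_real (x powr (mm - nu))"
        using arg_cong[OF r, of complex_of_real] by simp
      have sp: "PS (cf mm (- nu) \<i>) (?Y x) = 1 + ?Qm x * ?Y x"
        using PS_split(1)[OF ent_m(1)] by simp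
      have "w x - complex_of_real AA * complex_of_real (x powr sm)
          - complex_of_real (x powr sp) * (complex_of_real AA * (complex_of_real (x powr (mm - nu)) * ?Qm x) + complex_of_real BB * ?Pp x)
          = complex_of_real AA * ?Qm x * (complex_of_real (x powr sm) * complex_of_real (x powr mm) - complex_of_real (x powr sp) * complex_of_real (x powr (mm - nu)))"
        unfolding w_def usol_def sm_def[symmetric] sp_def[symmetric] sp by (simp add: algebra_simps)
      also have "\<dots> = 0" using r' by simp
      finally have "w x - complex_of_real AA * complex_of_real (x powr sm) =
          complex_of_real (x powr sp) * (complex_of_real AA * (complex_of_real (x powr (mm - nu)) * ?Qm x) + complex_of_real BB * ?Pp x)"
        by simp
      then show ?case using elim by simp
    qed
  qed
qed

lemma ofr3: "a * b = c * (d * e) \<Longrightarrow> complex_of_real a * (complex_of_real b * P) = complex_of_real c * (complex_of_real d * (complex_of_real e * P))"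
  by (metis of_real_mult mult.assoc)

lemma ofr2: "a = c * d \<Longrightarrow> complex_of_real a * P = complex_of_real c * (complex_of_real d * P)"
  by (metis of_real_mult mult.assoc)

lemma usol'_div:
  assumes x: "x > 0"
  shows "usol' mm \<mu> \<beta> \<i> x / complex_of_real (x powr (sm - 1)) =
     complex_of_real (x powr (ss \<beta> \<mu> - sm + mm)) * (complex_of_real mm * PS (diffs (cf mm \<mu> \<i>)) (complex_of_real (x powr mm)))
     + complex_of_real (ss \<beta> \<mu> * x powr (ss \<beta> \<mu> - sm)) * PS (cf mm \<mu> \<i>) (complex_of_real (x powr mm))"
proof -
  let ?s = "ss \<beta> \<mu>"
  have r1: "(1 * x powr ?s) * (1 * (mm * x powr (mm - 1))) = x powr (sm - 1) * (x powr (?s - sm + mm) * mm)"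
  proof -
    have "x powr ?s * x powr (mm - 1) = x powr (?s + mm - 1)" by (rule powr_comb) simp
    also have "\<dots> = x powr (sm - 1) * x powr (?s - sm + mm)" by (rule powr_comb[symmetric]) simp
    finally have "x powr ?s * x powr (mm - 1) = x powr (sm - 1) * x powr (?s - sm + mm)" .
    then show ?thesis by (simp add: algebra_simps)
  qed
  have r2: "1 * (?s * x powr (?s - 1)) = x powr (sm - 1) * (?s * x powr (?s - sm))"
  proof -
    have "x powr (sm - 1) * x powr (?s - sm) = x powr (?s - 1)" by (rule powr_comb) simp
    then have "x powr (?s - 1) = x powr (sm - 1) * x powr (?s - sm)" by simp
    then show ?thesis by (simp add: algebra_simps)
  qed
  have "usol' mm \<mu> \<beta> \<i> x = complex_of_real (x powr (sm - 1)) *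
     (complex_of_real (x powr (?s - sm + mm)) * (complex_of_real mm * PS (diffs (cf mm \<mu> \<i>)) (complex_of_real (x powr mm)))
     + complex_of_real (?s * x powr (?s - sm)) * PS (cf mm \<mu> \<i>) (complex_of_real (x powr mm)))"
    unfolding usol'_def ofr3[OF r1] ofr2[OF r2] by (simp add: algebra_simps)
  then show ?thesis using x by simp
qed

lemma LC: "((\<lambda>x. w' x / complex_of_real (x powr (sm - 1))) \<longlongrightarrow> complex_of_real (AA * sm)) (at_right 0)"
proof -
  let ?P1m = "\<lambda>x. PS (diffs (cf mm (- nu) \<i>)) (complex_of_real (x powr mm))"
  let ?Pm = "\<lambda>x. PS (cf mm (- nu) \<i>) (complex_of_real (x powr mm))"
  let ?P1p = "\<lambda>x. PS (diffs (cf mm nu \<i>)) (complex_of_real (x powr mm))"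
  let ?Pp = "\<lambda>x. PS (cf mm nu \<i>) (complex_of_real (x powr mm))"
  let ?E = "\<lambda>x. complex_of_real AA * (complex_of_real (x powr mm) * (complex_of_real mm * ?P1m x)
     + complex_of_real sm * ?Pm x) + complex_of_real BB * (complex_of_real (x powr (nu + mm)) * (complex_of_real mm * ?P1p x)
     + complex_of_real sp * (complex_of_real (x powr nu) * ?Pp x))"
  have np: "nu + mm > 0" using nu_pos mm_pos by simp
  have "(?E \<longlongrightarrow> complex_of_real AA * (complex_of_real 0 * (complex_of_real mm * diffs (cf mm (- nu) \<i>) 0)
     + complex_of_real sm * 1) + complex_of_real BB * (complex_of_real 0 * (complex_of_real mm * diffs (cf mm nu \<i>) 0)
     + complex_of_real sp * (complex_of_real 0 * 1))) (at_right 0)"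
    using PS_tend0[OF ent_m(1) mm_pos] PS_tend0[OF ent_p(1) mm_pos]
      PS_tend0[OF ent_m(2) mm_pos] PS_tend0[OF ent_p(2) mm_pos]
    by (intro tendsto_intros tendsto_of_real[OF powr_to0[OF mm_pos]] tendsto_of_real[OF powr_to0[OF np]]
        tendsto_of_real[OF powr_to0[OF nu_pos]]) auto
  then have t: "(?E \<longlongrightarrow> complex_of_real (AA * sm)) (at_right 0)" by simp
  show ?thesis
  proof (rule Lim_transform_eventually[OF t])
    show "eventually (\<lambda>x. ?E x = w' x / complex_of_real (x powr (sm - 1))) (at_right 0)"
      using evpos
    proof eventually_elim
      case (elim x)
      have e1: "ss \<beta> (- nu) = sm" by (simp add: sm_def)
      have e2: "ss \<beta> nu = sp" by (simp add: sp_def)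
      have e3: "mm + sp - sm = nu + mm" "sp - sm = nu" "sp - sm + mm = nu + mm" using sp_sm by simp_all
      have "w' x / complex_of_real (x powr (sm - 1)) = complex_of_real AA * (usol' mm (- nu) \<beta> \<i> x / complex_of_real (x powr (sm - 1)))
          + complex_of_real BB * (usol' mm nu \<beta> \<i> x / complex_of_real (x powr (sm - 1)))"
        unfolding w'_def by (simp add: add_divide_distrib)
      also have "\<dots> = ?E x" unfolding usol'_div[OF elim] e1 e2 e3 using elim by (simp add: algebra_simps e3)
      finally show ?case by simp
    qed
  qed
qed

end


context S6
begin

lemma AA_pos: "AA > 0"
  unfolding AA_def using b1 d0 d1 by (simp add: sin_gt_zero)

lemma sm_nz: "sm \<noteq> 0"
  unfolding sm_def ss_def nu_def mm_def using nu1 by simp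

lemma ev_le1: "eventually (\<lambda>x::real. 0 < x \<and> x \<le> 1) (at_right 0)"
  unfolding eventually_at_right_field by (intro exI[of _ 1]) auto

lemma ff_w: "0 < x \<Longrightarrow> x \<le> 1 \<Longrightarrow> ff x = w x"
  unfolding ff_def using chi_vals(1)[of x] by simp

lemma ff'_w': "0 < x \<Longrightarrow> x \<le> 1 \<Longrightarrow> ff' x = w' x"
  unfolding ff'_def using chi_vals(1,2)[of x] by simp

lemma ff_zero: "x \<ge> 2 \<Longrightarrow> ff x = 0"
  unfolding ff_def using chi_vals(4)[of x] by simp

lemma ff_bound: "\<exists>C e. 0 < e \<and> e \<le> 1 \<and> (\<forall>x. 0 < x \<longrightarrow> x \<le> e \<longrightarrow> cmod (ff x) \<le> C * x powr sm)"
proof -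
  obtain e where e: "e > 0" and he: "\<And>x. 0 < x \<Longrightarrow> x \<le> e \<Longrightarrow> cmod (w x) \<le> (cmod (complex_of_real AA) + 1) * x powr sm"
    using bound_from_lim[OF LA] by blast
  show ?thesis
    by (rule exI[of _ "cmod (complex_of_real AA) + 1"], rule exI[of _ "min e 1"]) (use e he ff_w in auto)
qed

lemma exp_ok: "\<alpha> + 2 * sm > -1"
  unfolding sm_def ss_def using nu_lt unfolding mm_def by (simp add: field_simps)

lemma L2_ff: "L2w \<alpha> ff"
  unfolding L2w_def
proof
  show "set_borel_measurable lborel {0<..} ff" by (rule cont_meas[OF ff_cont]) simp
  obtain C e where Ce: "0 < e" "e \<le> 1" "\<And>x. 0 < x \<Longrightarrow> x \<le> e \<Longrightarrow> cmod (ff x) \<le> C * x powr sm"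
    using ff_bound by blast
  show "set_integrable lborel {0<..} (\<lambda>x. x powr \<alpha> * (cmod (ff x))\<^sup>2)"
    by (rule L2_gen[where b=2 and e=e and C=C and p=sm]) (use Ce exp_ok ff_cont ff_zero in auto)
qed

lemma tau_cont: "continuous_on {0<..} (tau \<alpha> \<beta> \<gamma> ff kk)"
  unfolding tau_def[abs_def] by (intro continuous_intros ff_cont kk_cont) auto

lemma L2_tau: "L2w \<alpha> (tau \<alpha> \<beta> \<gamma> ff kk)"
  unfolding L2w_def
proof
  show "set_borel_measurable lborel {0<..} (tau \<alpha> \<beta> \<gamma> ff kk)" by (rule cont_meas[OF tau_cont]) simp
  obtain C e where Ce: "0 < e" "e \<le> 1" "\<And>x. 0 < x \<Longrightarrow> x \<le> e \<Longrightarrow> cmod (ff x) \<le> C * x powr sm"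
    using ff_bound by blast
  have z: "tau \<alpha> \<beta> \<gamma> ff kk x = 0" if "x \<ge> 2" for x
    using tau_big[OF that] ff_zero[OF that] by simp
  have b: "cmod (tau \<alpha> \<beta> \<gamma> ff kk x) \<le> C * x powr sm" if "0 < x" "x \<le> e" for x
  proof -
    have "tau \<alpha> \<beta> \<gamma> ff kk x = \<i> * ff x" using tau_small[of x] that Ce by simp
    then show ?thesis using Ce(3)[OF that] by (simp add: norm_mult)
  qed
  show "set_integrable lborel {0<..} (\<lambda>x. x powr \<alpha> * (cmod (tau \<alpha> \<beta> \<gamma> ff kk x))\<^sup>2)"
    by (rule L2_gen[where b=2 and e=e and C=C and p=sm]) (use Ce exp_ok b tau_cont z in auto)
qed

lemma L2_gg: "L2w \<alpha> gg"
  unfolding L2w_def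
proof
  show "set_borel_measurable lborel {0<..} gg" by (rule cont_meas[OF gg_cont]) simp
  show "set_integrable lborel {0<..} (\<lambda>x. x powr \<alpha> * (cmod (gg x))\<^sup>2)"
    by (rule L2_gen[where b=3 and e="1/2" and C=0 and p=0]) (use gg_cont gg_zero a1 in auto)
qed

lemma phi0_eq: "phi0 \<alpha> \<beta> \<gamma> x = ((1 - \<beta>) / nu) * x powr sm"
  unfolding phi0_def nu_def mm_def sm_def ss_def by (simp add: algebra_simps)

lemma phi1_eq: "phi1 \<alpha> \<beta> \<gamma> x = inverse (1 - \<beta>) * x powr sp"
  unfolding phi1_def nu_def mm_def sp_def ss_def by (simp add: algebra_simps)

lemma bdry: "\<exists>gt0 gt1.
        ((\<lambda>x. ff x / complex_of_real (phi0 \<alpha> \<beta> \<gamma> x)) \<longlongrightarrow> gt0) (at_right 0) \<and>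
        ((\<lambda>x. (ff x - gt0 * complex_of_real (phi0 \<alpha> \<beta> \<gamma> x)) / complex_of_real (phi1 \<alpha> \<beta> \<gamma> x))
            \<longlongrightarrow> gt1) (at_right 0) \<and>
        complex_of_real (sin \<delta>) * gt1 + complex_of_real (cos \<delta>) * gt0 = 0"
proof (intro exI conjI)
  define P0 where "P0 = (1 - \<beta>) / nu"
  have P0: "P0 \<noteq> 0" unfolding P0_def using b1 nu_pos by simp
  have bb: "1 - \<beta> \<noteq> 0" using b1 by simp
  show "((\<lambda>x. ff x / complex_of_real (phi0 \<alpha> \<beta> \<gamma> x)) \<longlongrightarrow> complex_of_real AA / complex_of_real P0) (at_right 0)"
  proof (rule Lim_transform_eventually[OF tendsto_divide[OF LA tendsto_const]])
    show "complex_of_real P0 \<noteq> 0" using P0 by simp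
    show "eventually (\<lambda>x. w x / complex_of_real (x powr sm) / complex_of_real P0 = ff x / complex_of_real (phi0 \<alpha> \<beta> \<gamma> x)) (at_right 0)"
      using ev_le1 by eventually_elim (simp add: ff_w phi0_eq P0_def)
  qed
  show "((\<lambda>x. (ff x - complex_of_real AA / complex_of_real P0 * complex_of_real (phi0 \<alpha> \<beta> \<gamma> x)) / complex_of_real (phi1 \<alpha> \<beta> \<gamma> x))
      \<longlongrightarrow> complex_of_real (1 - \<beta>) * complex_of_real BB) (at_right 0)"
  proof (rule Lim_transform_eventually[OF tendsto_mult[OF tendsto_const LB]])
    show "eventually (\<lambda>x. complex_of_real (1 - \<beta>) * ((w x - complex_of_real AA * complex_of_real (x powr sm)) / complex_of_real (x powr sp))
      = (ff x - complex_of_real AA / complex_of_real P0 * complex_of_real (phi0 \<alpha> \<beta> \<gamma> x)) / complex_of_real (phi1 \<alpha> \<beta> \<gamma> x)) (at_right 0)"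
      using ev_le1
    proof eventually_elim
      case (elim x)
      have "complex_of_real AA / complex_of_real P0 * complex_of_real (phi0 \<alpha> \<beta> \<gamma> x) = complex_of_real AA * complex_of_real (x powr sm)"
        unfolding phi0_eq P0_def[symmetric] using P0 by simp
      then show ?case using elim bb unfolding phi1_eq by (simp add: ff_w field_simps)
    qed
  qed
  show "complex_of_real (sin \<delta>) * (complex_of_real (1 - \<beta>) * complex_of_real BB) +
      complex_of_real (cos \<delta>) * (complex_of_real AA / complex_of_real P0) = 0"
  proof -
    have "sin \<delta> * ((1 - \<beta>) * BB) + cos \<delta> * (AA / P0) = 0"
      unfolding AA_def BB_def P0_def using bb nu_pos by (simp add: field_simps)
    then have "complex_of_real (sin \<delta> * ((1 - \<beta>) * BB) + cos \<delta> * (AA / P0)) = 0" by simp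
    then show ?thesis by simp
  qed
qed

lemma energy1: "((\<lambda>\<epsilon>. \<integral>\<^sup>+ x\<in>{\<epsilon><..}. ennreal (x powr \<beta> * (cmod (ff' x))\<^sup>2) \<partial>lborel) \<longlongrightarrow> \<infinity>) (at_right 0)"
proof (rule energy_div[of _ "sm - 1" "cmod (complex_of_real (AA * sm))" nu])
  have t: "((\<lambda>x. cmod (w' x / complex_of_real (x powr (sm - 1)))) \<longlongrightarrow> cmod (complex_of_real (AA * sm))) (at_right 0)"
    by (rule tendsto_norm[OF LC])
  show "((\<lambda>x. cmod (ff' x) / x powr (sm - 1)) \<longlongrightarrow> cmod (complex_of_real (AA * sm))) (at_right 0)"
    by (rule Lim_transform_eventually[OF t]) (use ev_le1 in \<open>eventually_elim, simp add: ff'_w' norm_divide\<close>)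
  show "0 < cmod (complex_of_real (AA * sm))" using AA_pos sm_nz by simp
  show "0 < nu" by (rule nu_pos)
  show "\<beta> + 2 * (sm - 1) = - nu - 1" unfolding sm_def ss_def by (simp add: field_simps)
qed

lemma energy2: "((\<lambda>\<epsilon>. \<integral>\<^sup>+ x\<in>{\<epsilon><..}. ennreal (x powr (\<beta> - 2) * (cmod (ff x))\<^sup>2) \<partial>lborel) \<longlongrightarrow> \<infinity>) (at_right 0)"
proof (rule energy_div[of _ sm "cmod (complex_of_real AA)" nu])
  have t: "((\<lambda>x. cmod (w x / complex_of_real (x powr sm))) \<longlongrightarrow> cmod (complex_of_real AA)) (at_right 0)"
    by (rule tendsto_norm[OF LA])
  show "((\<lambda>x. cmod (ff x) / x powr sm) \<longlongrightarrow> cmod (complex_of_real AA)) (at_right 0)"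
    by (rule Lim_transform_eventually[OF t]) (use ev_le1 in \<open>eventually_elim, simp add: ff_w norm_divide\<close>)
  show "0 < cmod (complex_of_real AA)" using AA_pos by simp
  show "0 < nu" by (rule nu_pos)
  show "\<beta> - 2 + 2 * sm = - nu - 1" unfolding sm_def ss_def by (simp add: field_simps)
qed

lemma main:
  "\<exists>z g f f' k.
           Im z \<noteq> 0 \<and> L2w \<alpha> g \<and>
           (\<exists>a b. 0 < a \<and> a \<le> b \<and> (\<forall>x. x \<notin> {a..b} \<longrightarrow> g x = 0)) \<and>
           ddelta \<alpha> \<beta> \<gamma> \<delta> f f' k \<and>
           (AE x in lborel. x > 0 \<longrightarrow> tau \<alpha> \<beta> \<gamma> f k x - z * f x = g x) \<and>
           ((\<lambda>\<epsilon>. \<integral>\<^sup>+ x\<in>{\<epsilon><..}. ennreal (x powr \<beta> * (cmod (f' x))\<^sup>2) \<partial>lborel)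
              \<longlongrightarrow> \<infinity>) (at_right 0) \<and>
           ((\<lambda>\<epsilon>. \<integral>\<^sup>+ x\<in>{\<epsilon><..}. ennreal (x powr (\<beta> - 2) * (cmod (f x))\<^sup>2) \<partial>lborel)
              \<longlongrightarrow> \<infinity>) (at_right 0)"
proof (rule exI[of _ \<i>], rule exI[of _ gg], rule exI[of _ ff], rule exI[of _ ff'], rule exI[of _ kk], intro conjI)
  show "Im \<i> \<noteq> 0" by simp
  show "L2w \<alpha> gg" by (rule L2_gg)
  show "\<exists>a b. 0 < a \<and> a \<le> b \<and> (\<forall>x. x \<notin> {a..b} \<longrightarrow> gg x = 0)"
    using gg_zero by (intro exI[of _ 1] exI[of _ 2]) auto
  show "ddelta \<alpha> \<beta> \<gamma> \<delta> ff ff' kk"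
    unfolding ddelta_def dmax_def using L2_ff AC1 AC2 L2_tau bdry by blast
  show "AE x in lborel. x > 0 \<longrightarrow> tau \<alpha> \<beta> \<gamma> ff kk x - \<i> * ff x = gg x"
    by (rule AE_I2) (simp add: gg_def)
  show "((\<lambda>\<epsilon>. \<integral>\<^sup>+ x\<in>{\<epsilon><..}. ennreal (x powr \<beta> * (cmod (ff' x))\<^sup>2) \<partial>lborel) \<longlongrightarrow> \<infinity>) (at_right 0)"
    by (rule energy1)
  show "((\<lambda>\<epsilon>. \<integral>\<^sup>+ x\<in>{\<epsilon><..}. ennreal (x powr (\<beta> - 2) * (cmod (ff x))\<^sup>2) \<partial>lborel) \<longlongrightarrow> \<infinity>) (at_right 0)"
    by (rule energy2)
qed

end

theorem mainTheorem6:
  fixes \<alpha> \<beta> \<gamma> \<delta> :: real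
  assumes "\<alpha> > -1" and "\<beta> < 1" and "0 < \<gamma>" and "\<gamma> < 1"
    and "(2 + \<alpha> - \<beta>) * \<gamma> \<noteq> 1 - \<beta>"
    and "0 < \<delta>" and "\<delta> < pi"
  shows "\<exists>z g f f' k.
           Im z \<noteq> 0 \<and> L2w \<alpha> g \<and>
           (\<exists>a b. 0 < a \<and> a \<le> b \<and> (\<forall>x. x \<notin> {a..b} \<longrightarrow> g x = 0)) \<and>
           ddelta \<alpha> \<beta> \<gamma> \<delta> f f' k \<and>
           (AE x in lborel. x > 0 \<longrightarrow> tau \<alpha> \<beta> \<gamma> f k x - z * f x = g x) \<and>
           ((\<lambda>\<epsilon>. \<integral>\<^sup>+ x\<in>{\<epsilon><..}. ennreal (x powr \<beta> * (cmod (f' x))\<^sup>2) \<partial>lborel)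
              \<longlongrightarrow> \<infinity>) (at_right 0) \<and>
           ((\<lambda>\<epsilon>. \<integral>\<^sup>+ x\<in>{\<epsilon><..}. ennreal (x powr (\<beta> - 2) * (cmod (f x))\<^sup>2) \<partial>lborel)
              \<longlongrightarrow> \<infinity>) (at_right 0)"
proof -
  interpret S6 \<alpha> \<beta> \<gamma> \<delta> using assms by unfold_locales
  show ?thesis by (rule main)
qed

end
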